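(* Let $k\in(-\infty,0)\cup\{0,\omega\}\subset S^1$ and let $G^{\uparrow}_k=\{A\in O^{(k)}(4,\mathbb{R}) : a_{00}>0\}$ be the orthochronous subgroup of $O^{(k)}(4,\mathbb{R})$. Then $$\sup\left\{ \frac{|\mathbf{a_v}|}{a_{00}} : A\in G^{\uparrow}_k\right\}=c:=\sqrt{|k|}\in[0,\infty],$$ where by convention $\sqrt{|\omega|}=\infty$. That is, in a temporal linear model of spacetime, whose inertial frames have as transition matrices exactly the elements of $G^{\uparrow}_k$, the supremum of the speeds measured between inertial frames is $c$.
   Context: For $A\in GL(4,\mathbb{R})$ write $A=\begin{pmatrix} a_{00} & \mathbf{a_h}\\ \mathbf{a_v}^t & \hat A\end{pmatrix}$ with $a_{00}\in\mathbb{R}$, $\mathbf{a_h},\mathbf{a_v}\in\mathbb{R}^3$, $\hat A$ a $3\times3$ matrix; $|\mathbf{a_v}|$ is the Euclidean norm. If $A$ is the transition matrix (linear part of the affine coordinate change $(t,x)\mapsto(\bar t,\bar x)$) from a frame $R$ to a frame $\bar R$, the velocity of $R$ measured by $\bar R$ is $\mathbf{v}=\mathbf{a_v}/a_{00}$ and its speed is $|\mathbf{v}|$. Let $S^1=\mathbb{R}\cup\{\omega\}$ (extended real line with $\pm\infty$ identified to $\omega$). For $k\in\mathbb{R}$, $I^{(k)}=\mathrm{diag}(k,1,1,1)$ and $O^{(k)}(4,\mathbb{R})=\{A\in GL(4,\mathbb{R}) : (\det A)^2=1,\ A^tI^{(k)}A=I^{(k)}\}$; $O^{(\omega)}(4,\mathbb{R})=\{A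 : A^t\in O^{(0)}(4,\mathbb{R})\}$. *)

theory Defs
  imports "HOL-Analysis.Analysis" "HOL-Library.Extended_Real"
begin

datatype S1 = Fin real | Omega

text \<open>4x4 real matrices, indices 0..3 of the numeral type 4; index 0 is time.\<close>
type_synonym mat4 = "real^4^4"

definition Ik :: "real \<Rightarrow> mat4" where
  "Ik k = (\<chi> i j. if i = j then (if i = 0 then k else 1) else 0)"

definition Ok :: "real \<Rightarrow> mat4 set" where
  "Ok k = {A. (det A)^2 = 1 \<and> transpose A ** Ik k ** A = Ik k}"

definition OS1 :: "S1 \<Rightarrow> mat4 set" where
  "OS1 k = (case k of Fin r \<Rightarrow> Ok r | Omega \<Rightarrow> {A. transpose A \<in> Ok 0})"

definition Gup :: "S1 \<Rightarrow> mat4 set" where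
  "Gup k = {A \<in> OS1 k. A $ 0 $ 0 > 0}"

definition a00 :: "mat4 \<Rightarrow> real" where "a00 A = A $ 0 $ 0"

definition norm_av :: "mat4 \<Rightarrow> real" where
  "norm_av A = sqrt ((A $ 1 $ 0)^2 + (A $ 2 $ 0)^2 + (A $ 3 $ 0)^2)"

definition cS1 :: "S1 \<Rightarrow> ereal" where
  "cS1 k = (case k of Fin r \<Rightarrow> ereal (sqrt \<bar>r\<bar>) | Omega \<Rightarrow> \<infinity>)"

end

theory Submission
  imports Defs
begin

lemma ex4: "(x::4) = 0 \<or> x = 1 \<or> x = 2 \<or> x = 3"
  using exhaust_4[of x] by auto

lemma all4: "(\<forall>i::4. P i) \<longleftrightarrow> P 0 \<and> P 1 \<and> P 2 \<and> P 3"
  by (metis ex4)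

lemma sum4: "sum f (UNIV::4 set) = f 0 + f 1 + f 2 + f 3"
proof -
  have U: "UNIV = {0, 1, 2, 3::4}" using ex4 by auto
  show ?thesis unfolding U by (simp add: ac_simps)
qed

lemma prod4: "prod f (UNIV::4 set) = f 0 * f 1 * f 2 * f 3"
proof -
  have U: "UNIV = {0, 1, 2, 3::4}" using ex4 by auto
  show ?thesis unfolding U by (simp add: ac_simps)
qed

lemma not_less0_4: "\<not> ((x::4) < 0)"
  using Rep_bit0[of x] by (simp add: less_bit0_def bit0.Rep_0 not_less)

lemma det_Ik: "det (Ik k) = k"
  by (subst det_diagonal) (auto simp: Ik_def prod4)

lemma entry00:
  "(transpose A ** Ik k ** A) $ 0 $ 0 = k * (A$0$0)^2 + (A$1$0)^2 + (A$2$0)^2 + (A$3$0)^2"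
  by (simp add: matrix_matrix_mult_def transpose_def Ik_def sum4 power2_eq_square)

definition bmat :: "real \<Rightarrow> real \<Rightarrow> real \<Rightarrow> mat4" where
  "bmat g c v = (\<chi> i j. if i = 0 \<and> j = 0 then g else if i = 0 \<and> j = 1 then g * v / c^2
       else if i = 1 \<and> j = 0 then g * v else if i = 1 \<and> j = 1 then g
       else if i = j then 1 else 0)"

definition boost :: "real \<Rightarrow> real \<Rightarrow> mat4" where
  "boost c v = bmat (c / sqrt (c^2 - v^2)) c v"

definition galilei :: "real \<Rightarrow> mat4" where
  "galilei v = (\<chi> i j. if i = j then 1 else if i = 1 \<and> j = 0 then v else 0)"

lemma boost_in:
  assumes c: "c > 0" and v: "0 \<le> v" "v < c"
  shows "boost c v \<in> Gup (Fin (-(c^2)))"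
    and "norm_av (boost c v) / a00 (boost c v) = v"
proof -
  define g where "g = c / sqrt (c^2 - v^2)"
  have pos: "c^2 - v^2 > 0" using c v
    by (smt (verit) mult_strict_mono power2_eq_square)
  have gpos: "g > 0" unfolding g_def using pos c by simp
  have gsq: "g^2 * (c^2 - v^2) = c^2" unfolding g_def using pos
    by (simp add: power_divide)
  have B: "boost c v = (\<chi> i j. if i = 0 \<and> j = 0 then g else if i = 0 \<and> j = 1 then g * v / c^2
       else if i = 1 \<and> j = 0 then g * v else if i = 1 \<and> j = 1 then g
       else if i = j then 1 else 0)" unfolding boost_def g_def bmat_def by simp
  have eq: "transpose (boost c v) ** Ik (-(c^2)) ** boost c v = Ik (-(c^2))"
    unfolding B using c gsq
    by (simp add: vec_eq_iff all4 matrix_matrix_mult_def transpose_def Ik_def sum4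
        field_simps power2_eq_square)
  have "det (transpose (boost c v) ** Ik (-(c^2)) ** boost c v) = det (Ik (-(c^2)))"
    using eq by simp
  then have "(det (boost c v))^2 * (-(c^2)) = -(c^2)"
    by (simp add: det_mul det_transpose det_Ik power2_eq_square)
  then have "(det (boost c v))^2 = 1" using c by simp
  then show "boost c v \<in> Gup (Fin (-(c^2)))"
    using eq gpos by (simp add: Gup_def OS1_def Ok_def B)
  show "norm_av (boost c v) / a00 (boost c v) = v"
    using gpos v by (simp add: B norm_av_def a00_def)
qed

lemma galilei_in:
  shows "galilei v \<in> Gup Omega" and "norm_av (galilei v) / a00 (galilei v) = \<bar>v\<bar>"
proof -
  have eq: "transpose (transpose (galilei v)) ** Ik 0 ** transpose (galilei v) = Ik 0"
    by (simp add: galilei_def vec_eq_iff all4 matrix_matrix_mult_def transpose_def Ik_def sum4)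
  have "det (transpose (galilei v)) = 1"
    unfolding det_transpose
    by (subst det_lowerdiagonal) (auto simp: galilei_def prod4 not_less0_4)
  then show "galilei v \<in> Gup Omega"
    using eq by (simp add: Gup_def OS1_def Ok_def galilei_def)
  show "norm_av (galilei v) / a00 (galilei v) = \<bar>v\<bar>"
    by (simp add: galilei_def norm_av_def a00_def)
qed

theorem mainTheorem3:
  fixes k :: S1
  assumes "k = Omega \<or> (\<exists>r. k = Fin r \<and> r \<le> 0)"
  shows "Sup {ereal (norm_av A / a00 A) | A. A \<in> Gup k} = cS1 k"
proof (cases "k = Omega")
  case True
  show ?thesis
  proof (rule Sup_eqI)
    fix y assume "y \<in> {ereal (norm_av A / a00 A) | A. A \<in> Gup k}"
    show "y \<le> cS1 k" using True by (simp add: cS1_def)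
  next
    fix y assume ub: "\<And>z. z \<in> {ereal (norm_av A / a00 A) | A. A \<in> Gup k} \<Longrightarrow> z \<le> y"
    have "y = \<infinity>"
    proof (rule ereal_top)
      fix B
      have "ereal \<bar>B\<bar> \<le> y"
        using ub[of "ereal \<bar>B\<bar>"] galilei_in[of B] True by force
      then show "ereal B \<le> y" by (meson abs_ge_self ereal_less_eq(3) order_trans)
    qed
    then show "cS1 k \<le> y" by simp
  qed
next
  case False
  then obtain r where k: "k = Fin r" and r: "r \<le> 0" using assms by auto
  have idin: "mat 1 \<in> Gup k"
  proof -
    have "det (mat 1 :: mat4) = 1" by (rule det_I)
    moreover have "transpose (mat 1) ** Ik r ** mat 1 = Ik r" by (simp add: transpose_mat)
    moreover have "(mat 1 :: mat4) $ 0 $ 0 > 0" by (simp add: mat_def)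
    ultimately show ?thesis by (simp add: k Gup_def OS1_def Ok_def)
  qed
  have id0: "norm_av (mat 1) / a00 (mat 1) = 0"
    by (simp add: norm_av_def mat_def)
  show ?thesis
  proof (rule Sup_eqI)
    fix y assume "y \<in> {ereal (norm_av A / a00 A) | A. A \<in> Gup k}"
    then obtain A where y: "y = ereal (norm_av A / a00 A)" and A: "A \<in> Gup k" by auto
    have a: "a00 A > 0" using A by (simp add: Gup_def a00_def)
    have "(transpose A ** Ik r ** A) $ 0 $ 0 = Ik r $ 0 $ 0"
      using A by (simp add: Gup_def OS1_def Ok_def k)
    then have e: "r * (a00 A)^2 + (A$1$0)^2 + (A$2$0)^2 + (A$3$0)^2 = r"
      by (subst (asm) entry00) (simp add: Ik_def a00_def)
    have "(norm_av A)^2 = (A$1$0)^2 + (A$2$0)^2 + (A$3$0)^2"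
      unfolding norm_av_def by (simp add: add_nonneg_nonneg)
    also have "\<dots> \<le> (sqrt \<bar>r\<bar> * a00 A)^2"
    proof -
      have "(sqrt \<bar>r\<bar> * a00 A)^2 = - r * (a00 A)^2"
        using r by (simp add: power_mult_distrib abs_of_nonpos)
      then show ?thesis using e r by linarith
    qed
    finally have "norm_av A \<le> sqrt \<bar>r\<bar> * a00 A"
      by (rule power2_le_imp_le) (use a in simp)
    then have "norm_av A / a00 A \<le> sqrt \<bar>r\<bar>" using a by (simp add: divide_le_eq)
    then show "y \<le> cS1 k" by (simp add: y k cS1_def)
  next
    fix y assume ub: "\<And>z. z \<in> {ereal (norm_av A / a00 A) | A. A \<in> Gup k} \<Longrightarrow> z \<le> y"
    have y0: "0 \<le> y" using ub[of 0] idin id0 by (metis (mono_tags, lifting) mem_Collect_eq zero_ereal_def)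
    show "cS1 k \<le> y"
    proof (rule ccontr)
      assume "\<not> cS1 k \<le> y"
      then have lt: "y < ereal (sqrt \<bar>r\<bar>)" by (simp add: k cS1_def)
      then obtain z where z1: "y < z" and z2: "z < ereal (sqrt \<bar>r\<bar>)" using dense by blast
      then obtain v where zv: "z = ereal v" using y0
        by (cases z) auto
      define c where "c = sqrt \<bar>r\<bar>"
      have v0: "0 \<le> v" using le_less_trans[OF y0 z1] zv by (simp add: zero_ereal_def)
      have vc: "v < c" using z2 zv c_def by simp
      then have c0: "c > 0" using v0 by simp
      have rc: "r = -(c^2)" using r c_def by simp
      have "ereal (norm_av (boost c v) / a00 (boost c v)) \<le> y"
        using ub boost_in(1)[OF c0 v0 vc] rc k by force
      then have "z \<le> y" using boost_in(2)[OF c0 v0 vc] zv by simp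
      then show False using z1 by simp
    qed
  qed
qed

end
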